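(* Let $\{F_n\}$ be the Fibonacci sequence, $F_0=0$, $F_1=1$, $F_{n+2}=F_{n+1}+F_n$. Then \[ \{F_n\}=\sum_{k=0}^{\infty} I_0^{\,k+1}\{a_n[x^k/k!]\}_L , \] where the sum is taken termwise (for each index only finitely many summands are nonzero).
   Context: Sequences are indexed by $n=0,1,2,\dots$; sums of sequences are termwise. The insertion operator is $I_0\{a_n\}=0,a_0,a_1,a_2,\dots$, and $I_0^{j}$ denotes $j$-fold application. The left integral is $\mathcal{I}_L^0\{a_n\}=\{\sum_{k=0}^{n-1}a_k\}$ (empty sum $=0$). Define $\{a_n[x^0/0!]\}_L=\{1\}=1,1,1,\dots$, $\{a_n[x^1/1!]\}_L=\{n\}=0,1,2,\dots$, and for $k\ge 2$, $\{a_n[x^k/k!]\}_L=(\mathcal{I}_L^0)^{k-1}\{n\}$ (the $(k-1)$-fold left integral of $0,1,2,\dots$). *)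

theory Defs
  imports Main
begin

text \<open>Sequences are functions nat => nat (all sequences involved are nonnegative integers).\<close>

fun Fibo :: "nat \<Rightarrow> nat" where
  "Fibo 0 = 0"
| "Fibo (Suc 0) = 1"
| "Fibo (Suc (Suc n)) = Fibo (Suc n) + Fibo n"

definition ins0 :: "(nat \<Rightarrow> nat) \<Rightarrow> nat \<Rightarrow> nat" where
  "ins0 a n = (case n of 0 \<Rightarrow> 0 | Suc m \<Rightarrow> a m)"

definition left_int :: "(nat \<Rightarrow> nat) \<Rightarrow> nat \<Rightarrow> nat" where
  "left_int a n = (\<Sum>k<n. a k)"

definition aL :: "nat \<Rightarrow> nat \<Rightarrow> nat" where
  "aL k = (if k = 0 then (\<lambda>n. 1)
           else if k = 1 then (\<lambda>n. n)
           else (left_int ^^ (k - 1)) (\<lambda>n. n))"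

end

theory Submission
  imports Defs "HOL-Number_Theory.Fib"
begin

lemma ins_pow: "(ins0 ^^ j) a n = (if n < j then 0 else a (n - j))"
proof (induction j arbitrary: n)
  case 0 then show ?case by simp
next
  case (Suc j) then show ?case
    by (cases n) (auto simp: ins0_def)
qed

lemma li_pow: "(left_int ^^ m) (\<lambda>n. n) n = n choose (Suc m)"
proof (induction m arbitrary: n)
  case 0 then show ?case by simp
next
  case (Suc m)
  have "(left_int ^^ Suc m) (\<lambda>n. n) n = (\<Sum>i<n. i choose Suc m)"
    by (simp add: left_int_def Suc)
  also have "\<dots> = n choose Suc (Suc m)"
  proof (cases n)
    case 0 then show ?thesis by simp
  next
    case (Suc p)
    have "(\<Sum>i\<le>p. i choose Suc m) = Suc p choose Suc (Suc m)" by (rule sum_choose_upper)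
    then show ?thesis using Suc by (simp only: lessThan_Suc_atMost)
  qed
  finally show ?case .
qed

lemma aL_choose: "aL k n = n choose k"
  using li_pow[of "k - 1" n] by (cases k) (auto simp: aL_def)

lemma Fibo_fib: "Fibo n = fib n"
  by (induction n rule: Fibo.induct) auto

lemma term_eq: "(ins0 ^^ (Suc k)) (aL k) n = (if n < Suc k then 0 else (n - Suc k) choose k)"
  by (subst ins_pow) (simp add: aL_choose)

theorem mainTheorem3:
  shows "\<forall>n. finite {k. (ins0 ^^ (k + 1)) (aL k) n \<noteq> 0} \<and>
             Fibo n = (\<Sum>k | (ins0 ^^ (k + 1)) (aL k) n \<noteq> 0. (ins0 ^^ (k + 1)) (aL k) n)"
proof
  fix n
  let ?t = "\<lambda>k. (ins0 ^^ (k + 1)) (aL k) n"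
  have sub: "{k. ?t k \<noteq> 0} \<subseteq> {..<n}"
    by (auto simp: term_eq simp del: funpow.simps split: if_splits)
  then have fin: "finite {k. ?t k \<noteq> 0}" using finite_subset by blast
  have "(\<Sum>k | ?t k \<noteq> 0. ?t k) = (\<Sum>k<n. ?t k)"
    by (rule sum.mono_neutral_left) (use sub in auto)
  also have "\<dots> = Fibo n"
  proof (cases n)
    case 0 then show ?thesis by simp
  next
    case (Suc p)
    have "(\<Sum>k<n. ?t k) = (\<Sum>k = 0..p. (p - k) choose k)"
      unfolding Suc by (rule sum.cong) (auto simp: term_eq simp del: funpow.simps)
    also have "\<dots> = Fibo n" using ne_diagonal_fib[of p] Suc by (simp add: Fibo_fib)
    finally show ?thesis .
  qed
  finally show "finite {k. ?t k \<noteq> 0} \<and> Fibo n = (\<Sum>k | ?t k \<noteq> 0. ?t k)"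
    using fin by simp
qed

end
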